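(* For every integer $n \ge 0$, define $\psi : \mathrm{SYT}(\theta^{(n)}) \to \mathcal{P}_n$ as follows. For $T \in \mathrm{SYT}(\theta^{(n)})$, let $\psi(T) = p_1 p_2 \cdots p_{2n+2}$, where for each $1 \le i \le 2n+2$: \[ p_i = \begin{cases} \mathsf{E}, & \text{if } i+2 \in \mathrm{arm}(T);\\ \mathsf{N}, & \text{if } i+2 \in \mathrm{leg}(T);\\ \mathsf{S}, & \text{if } i+2 \in \mathrm{heart}(T) \text{ and } 2 \in \mathrm{arm}(T);\\ \mathsf{W}, & \text{if } i+2 \in \mathrm{heart}(T) \text{ and } 2 \in \mathrm{leg}(T). \end{cases} \] Then $\psi(T)$ lies in $\mathcal{P}_n$ for every $T$, and $\psi$ is a bijection. In particular, $|\mathcal{P}_n| = |\mathrm{SYT}(\theta^{(n)})|$.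
   Context: For $n \ge 0$, $\theta^{(n)}$ denotes the integer partition $(n+2, 2, 1^n)$ of $2n+4$ (rows of lengths $n+2$, $2$, and then $n$ rows of length $1$), identified with its Young diagram in English convention (the row of length $n+2$ on top). The \emph{arm} of $\theta^{(n)}$ is its first row (all $n+2$ boxes, including the top-left corner box), the \emph{leg} is its first column (all $n+2$ boxes, including the top-left corner box), and the \emph{heart} is the unique box lying in neither the first row nor the first column (the second box of the second row). $\mathrm{SYT}(\theta^{(n)})$ is the set of standard Young tableaux of shape $\theta^{(n)}$: bijective fillings of the boxes with $1, \dots, 2n+4$ increasing left to right along rows and top to bottom down columns. For a tableau $T$, $\mathrm{arm}(T)$, $\mathrm{leg}(T)$, $\mathrm{heart}(T)$ denote the sets of entries of $T$ in the arm, leg, and heart respectively; "$k \in \mathrm{arm}(T)$" means the entry $k$ lies in the arm. $\mathcal{P}_n$ is the set of lattice paths in $\mathbb{Z}^2$ from $(0,0)$ to $(n,n)$ of exactly $2n+2$ steps, each step one of $\mathsf{N} = (0,1)$, $\mathsf{S} = (0,-1)$, $\mathsf{E} = (1,0)$, $\mathsf{W} = (-1,0)$, such that every vertex of the path lies in the closed first quadrant $\{(x,y) : x \ge 0, y \ge 0\}$. Such a path is identified with its word $p_1 p_2 \cdots p_{2n+2}$ of steps in the alphabet $\{\mathsf{N},\mathsf{S},\mathsf{E},\mathsf{W}\}$. *)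

theory Defs
  imports Main
begin

(* Partitions as lists of row lengths (weakly decreasing); cells (row, column), 0-indexed,
   English convention: row 0 is the top row. *)
definition young_diagram :: "nat list \<Rightarrow> (nat \<times> nat) set" where
  "young_diagram la = {(i, j). i < length la \<and> j < la ! i}"

(* Standard Young tableaux: bijective fillings with 1..|la|, increasing along rows and
   down columns; extended by 0 outside the diagram so that tableaux are unique functions. *)
definition SYT :: "nat list \<Rightarrow> ((nat \<times> nat) \<Rightarrow> nat) set" where
  "SYT la = {T. bij_betw T (young_diagram la) {1..sum_list la}
              \<and> (\<forall>i j. (i, j) \<in> young_diagram la \<and> (i, Suc j) \<in> young_diagram la
                        \<longrightarrow> T (i, j) < T (i, Suc j))
              \<and> (\<forall>i j. (i, j) \<in> young_diagram la \<and> (Suc i, j) \<in> young_diagram la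
                        \<longrightarrow> T (i, j) < T (Suc i, j))
              \<and> (\<forall>c. c \<notin> young_diagram la \<longrightarrow> T c = 0)}"

definition theta :: "nat \<Rightarrow> nat list" where
  "theta n = [n + 2, 2] @ replicate n 1"

definition arm :: "nat \<Rightarrow> ((nat \<times> nat) \<Rightarrow> nat) \<Rightarrow> nat set" where
  "arm n T = T ` {(0, j) | j. j < n + 2}"

definition leg :: "nat \<Rightarrow> ((nat \<times> nat) \<Rightarrow> nat) \<Rightarrow> nat set" where
  "leg n T = T ` {(i, 0) | i. i < n + 2}"

definition heart :: "((nat \<times> nat) \<Rightarrow> nat) \<Rightarrow> nat set" where
  "heart T = {T (1, 1)}"

datatype step = N | S | E | W

fun step_vec :: "step \<Rightarrow> int \<times> int" where
  "step_vec N = (0, 1)"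
| "step_vec S = (0, -1)"
| "step_vec E = (1, 0)"
| "step_vec W = (-1, 0)"

definition endpoint :: "step list \<Rightarrow> int \<times> int" where
  "endpoint w = (sum_list (map (fst \<circ> step_vec) w), sum_list (map (snd \<circ> step_vec) w))"

definition paths :: "nat \<Rightarrow> step list set" where
  "paths n = {w. length w = 2 * n + 2
               \<and> endpoint w = (int n, int n)
               \<and> (\<forall>k \<le> length w. fst (endpoint (take k w)) \<ge> 0 \<and> snd (endpoint (take k w)) \<ge> 0)}"

definition psi :: "nat \<Rightarrow> ((nat \<times> nat) \<Rightarrow> nat) \<Rightarrow> step list" where
  "psi n T = map (\<lambda>i. if i + 2 \<in> arm n T then E
                      else if i + 2 \<in> leg n T then N
                      else if i + 2 \<in> heart T \<and> 2 \<in> arm n T then S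
                      else W) [1..<2 * n + 3]"

end

theory Submission
  imports Defs
begin

lemma endpoint_cnt: "endpoint w = (int (count_list w E) - int (count_list w W), int (count_list w N) - int (count_list w S))"
proof (induction w)
  case (Cons a w) then show ?case by (cases a) (auto simp: endpoint_def)
qed (simp add: endpoint_def)

lemma count_len: "length w = count_list w N + count_list w S + count_list w E + count_list w W"
proof (induction w)
  case (Cons a w) then show ?case by (cases a) auto
qed simp

lemma count_card: "count_list xs x = card {i. i < length xs \<and> xs!i = x}"
  by (simp add: count_list_eq_length_filter length_filter_conv_card eq_commute)

lemma D_mem: "(i,j) \<in> young_diagram (theta n) \<longleftrightarrow> (i=0 \<and> j<n+2) \<or> (j=0 \<and> i<n+2) \<or> (i=1 \<and> j=1)"
proof (cases i)
  case 0 then show ?thesis by (auto simp: young_diagram_def theta_def)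
next
  case (Suc k) then show ?thesis
    by (cases k) (auto simp: young_diagram_def theta_def nth_append)
qed

lemma sum_theta: "sum_list (theta n) = 2*n+4"
  by (simp add: theta_def sum_list_replicate)

definition idx :: "step list \<Rightarrow> step \<Rightarrow> nat set" where
  "idx w c = {i. i < length w \<and> w!i = c}"

lemma finite_idx[simp]: "finite (idx w c)"
  unfolding idx_def by auto

lemma count_idx: "count_list w c = card (idx w c)"
  by (simp add: count_card idx_def)

definition Aw :: "step list \<Rightarrow> nat set" where
  "Aw w = {1} \<union> (if S \<in> set w then {2} else {}) \<union> (\<lambda>i. i+3) ` idx w E"

definition Lw :: "step list \<Rightarrow> nat set" where
  "Lw w = {1} \<union> (if W \<in> set w then {2} else {}) \<union> (\<lambda>i. i+3) ` idx w N"

definition hw :: "step list \<Rightarrow> nat" where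
  "hw w = (LEAST i. i < length w \<and> (w!i = S \<or> w!i = W)) + 3"

definition phi :: "nat \<Rightarrow> step list \<Rightarrow> (nat \<times> nat) \<Rightarrow> nat" where
  "phi n w = (\<lambda>(i,j). if (i,j) = (1,1) then hw w
     else if i = 0 \<and> j < n+2 then sorted_list_of_set (Aw w) ! j
     else if j = 0 \<and> i < n+2 then sorted_list_of_set (Lw w) ! i else 0)"

lemma card_gen: "finite I \<Longrightarrow> X \<subseteq> {2::nat} \<Longrightarrow> card ({1} \<union> X \<union> (\<lambda>i. i+3) ` I) = 1 + card X + card I"
proof -
  assume fI: "finite I" and X: "X \<subseteq> {2}"
  have fX: "finite X" using X finite_subset by blast
  have "card ({1} \<union> X \<union> (\<lambda>i. i+3) ` I) = card ({1} \<union> X) + card ((\<lambda>i. i+3) ` I)"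
    by (rule card_Un_disjoint) (use fI fX X in auto)
  moreover have "card ({1} \<union> X) = 1 + card X"
    using fX X by (subst card_Un_disjoint) auto
  moreover have "card ((\<lambda>i. i+3) ` I) = card I"
    by (rule card_image) (auto simp: inj_on_def)
  ultimately show ?thesis by simp
qed

lemma card_Aw: "card (Aw w) = 1 + (if S \<in> set w then 1 else 0) + count_list w E"
  unfolding Aw_def count_idx by (subst card_gen) auto

lemma card_Lw: "card (Lw w) = 1 + (if W \<in> set w then 1 else 0) + count_list w N"
  unfolding Lw_def count_idx by (subst card_gen) auto

lemma finite_Aw[simp]: "finite (Aw w)" and finite_Lw[simp]: "finite (Lw w)"
  by (auto simp: Aw_def Lw_def)

lemma prefix_ok:
  assumes before: "\<forall>j<length w. w!j = b \<longrightarrow> (\<exists>i<j. w!i = a)"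
    and uniq: "\<forall>i<length w. \<forall>j<length w. w!i = b \<longrightarrow> w!j = b \<longrightarrow> i = j"
  shows "int (count_list (take k w) b) \<le> int (count_list (take k w) a)"
proof -
  have eq: "\<And>c. count_list (take k w) c = card {i. i < min k (length w) \<and> w!i = c}"
    unfolding count_card by (rule arg_cong[where f=card]) auto
  show ?thesis
  proof (cases "{i. i < min k (length w) \<and> w!i = b} = {}")
    case True then show ?thesis unfolding eq True by simp
  next
    case False
    then obtain j where j: "j < min k (length w)" "w!j = b" by auto
    have sub: "{i. i < min k (length w) \<and> w!i = b} \<subseteq> {j}" using uniq j by auto
    have c1: "card {i. i < min k (length w) \<and> w!i = b} \<le> 1"
      using card_mono[OF _ sub] by simp
    obtain i where i: "i < j" "w!i = a" using before j by auto
    have "i \<in> {i. i < min k (length w) \<and> w!i = a}" using i j by auto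
    then have "card {i. i < min k (length w) \<and> w!i = a} \<ge> 1"
      by (metis (no_types, lifting) One_nat_def Suc_leI card_gt_0_iff empty_iff finite_nat_set_iff_bounded mem_Collect_eq)
    then show ?thesis unfolding eq using c1 by linarith
  qed
qed


lemma D_eq: "young_diagram (theta n) = insert (1,1) ((\<lambda>j. (0,j)) ` {..<n+2} \<union> (\<lambda>i. (Suc i,0)) ` {..<n+1})"
proof (rule set_eqI)
  fix x :: "nat \<times> nat"
  obtain a b where x: "x = (a,b)" by force
  show "x \<in> young_diagram (theta n) \<longleftrightarrow> x \<in> insert (1,1) ((\<lambda>j. (0,j)) ` {..<n+2} \<union> (\<lambda>i. (Suc i,0)) ` {..<n+1})"
    unfolding x D_mem by (cases a) auto
qed

lemma finite_D: "finite (young_diagram (theta n))"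
  unfolding D_eq by simp

lemma card_D: "card (young_diagram (theta n)) = 2*n+4"
proof -
  have c1: "card ((\<lambda>j. (0::nat,j)) ` {..<n+2}) = n+2" by (simp add: card_image inj_on_def)
  have c2: "card ((\<lambda>i. (Suc i,0::nat)) ` {..<n+1}) = n+1" by (simp add: card_image inj_on_def)
  have "card ((\<lambda>j. (0::nat,j)) ` {..<n+2} \<union> (\<lambda>i. (Suc i,0::nat)) ` {..<n+1}) = (n+2) + (n+1)"
    using c1 c2 by (subst card_Un_disjoint) auto
  then show ?thesis unfolding D_eq by (subst card_insert_disjoint) auto
qed

lemma img3: "k \<in> (\<lambda>i. i+3) ` idx w c \<longleftrightarrow> 3 \<le> k \<and> k - 3 < length w \<and> w!(k-3) = c"
  by (auto simp: idx_def image_iff intro!: exI[of _ "k-3"])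

definition gT0 :: "nat \<Rightarrow> (nat \<times> nat \<Rightarrow> nat) \<Rightarrow> nat \<Rightarrow> step" where
  "gT0 n T k = (if k \<in> arm n T then E
                      else if k \<in> leg n T then N
                      else if k \<in> heart T \<and> 2 \<in> arm n T then S
                      else W)"

lemma psi_nth_gen: "i < 2*n+2 \<Longrightarrow> psi n T ! i = (if i+3 \<in> arm n T then E
                      else if i+3 \<in> leg n T then N
                      else if i+3 \<in> heart T \<and> 2 \<in> arm n T then S
                      else W)"
proof -
  assume i: "i < 2*n+2"
  have "psi n T = map (\<lambda>i. gT0 n T (i+2)) [1..<2*n+3]" by (simp add: psi_def gT0_def)
  then have "psi n T ! i = gT0 n T ([1..<2*n+3] ! i + 2)" using i by simp
  also have "[1..<2*n+3] ! i + 2 = i + 3" using i by simp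
  finally show ?thesis by (simp add: gT0_def)
qed

lemma len_psi_gen: "length (psi n T) = 2*n+2"
  by (simp add: psi_def)

lemma sl_strict: "finite X \<Longrightarrow> sorted_wrt (<) (sorted_list_of_set (X::nat set))"
  by simp

lemma slmono: "finite X \<Longrightarrow> i < j \<Longrightarrow> j < card X \<Longrightarrow> sorted_list_of_set (X::nat set) ! i < sorted_list_of_set X ! j"
  using sorted_wrt_nth_less[OF sl_strict] by simp

lemma slmem: "finite X \<Longrightarrow> j < card X \<Longrightarrow> sorted_list_of_set (X::nat set) ! j \<in> X"
  by (metis length_sorted_list_of_set nth_mem set_sorted_list_of_set)

lemma slall: "finite X \<Longrightarrow> x \<in> X \<Longrightarrow> \<exists>j<card X. sorted_list_of_set (X::nat set) ! j = x"
  by (metis in_set_conv_nth length_sorted_list_of_set set_sorted_list_of_set)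

lemma sl0: "finite X \<Longrightarrow> 1 \<in> X \<Longrightarrow> (\<forall>x\<in>X. 1 \<le> x) \<Longrightarrow> sorted_list_of_set (X::nat set) ! 0 = 1"
proof -
  assume f: "finite X" and one: "1 \<in> X" and ge: "\<forall>x\<in>X. 1 \<le> x"
  obtain p where p: "p < card X" "sorted_list_of_set X ! p = 1" using slall[OF f one] by blast
  have "sorted_list_of_set X ! 0 \<in> X" using slmem[OF f] p by simp
  then have "sorted_list_of_set X ! 0 \<ge> 1" using ge by simp
  moreover have "p = 0 \<or> sorted_list_of_set X ! 0 < 1" using slmono[OF f, of 0 p] p by (cases "p = 0") auto
  ultimately show ?thesis using p by auto
qed

lemma sl1: "finite X \<Longrightarrow> sorted_list_of_set (X::nat set) ! 0 = 1 \<Longrightarrow> x \<in> X \<Longrightarrow> x \<noteq> 1 \<Longrightarrow> sorted_list_of_set X ! 1 \<le> x"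
proof -
  assume f: "finite X" and z: "sorted_list_of_set X ! 0 = 1" and x: "x \<in> X" "x \<noteq> 1"
  obtain p where p: "p < card X" "sorted_list_of_set X ! p = x" using slall[OF f x(1)] by blast
  have "p \<noteq> 0" using p z x by (cases "p = 0") auto
  then show ?thesis using slmono[OF f, of 1 p] p by (cases "p = 1") auto
qed

context
  fixes n :: nat and T :: "nat \<times> nat \<Rightarrow> nat"
  assumes T: "T \<in> SYT (theta n)"
begin

lemma bijT: "bij_betw T (young_diagram (theta n)) {1..2*n+4}"
  using T by (simp add: SYT_def sum_theta)

lemma rowS: "Suc j < n+2 \<Longrightarrow> T(0,j) < T(0,Suc j)"
  using T by (auto simp: SYT_def D_mem)

lemma colS: "Suc i < n+2 \<Longrightarrow> T(i,0) < T(Suc i,0)"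
  using T by (auto simp: SYT_def D_mem)

lemma h10: "T(1,0) < T(1,1)"
  using T unfolding SYT_def by (auto simp: D_mem)

lemma h01: "T(0,1) < T(1,1)"
  using T unfolding SYT_def by (auto simp: D_mem)

lemma outT: "c \<notin> young_diagram (theta n) \<Longrightarrow> T c = 0"
  using T by (cases c) (simp add: SYT_def)

lemma rowmono: "j < j' \<Longrightarrow> j' < n+2 \<Longrightarrow> T(0,j) < T(0,j')"
proof (induction j')
  case 0 then show ?case by simp
next
  case (Suc j')
  then show ?case using rowS[of j'] by (cases "j = j'") auto
qed

lemma colmono: "i < i' \<Longrightarrow> i' < n+2 \<Longrightarrow> T(i,0) < T(i',0)"
proof (induction i')
  case 0 then show ?case by simp
next
  case (Suc i')
  then show ?case using colS[of i'] by (cases "i = i'") auto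
qed

lemma injT: "inj_on T (young_diagram (theta n))"
  using bijT bij_betw_def by blast

lemma rangeT: "c \<in> young_diagram (theta n) \<Longrightarrow> T c \<in> {1..2*n+4}"
  using bijT bij_betwE by blast

lemma surjT: "k \<in> {1..2*n+4} \<Longrightarrow> \<exists>c\<in>young_diagram (theta n). T c = k"
  using bijT by (metis bij_betw_def imageE)

lemma T00: "T(0,0) = 1"
proof -
  have le: "T(0,0) \<le> T c" if "c \<in> young_diagram (theta n)" for c
  proof -
    obtain a b where c: "c = (a,b)" by force
    have "(a,b) \<in> young_diagram (theta n)" using that c by simp
    then consider "a = 0" "b < n+2" | "b = 0" "a < n+2" | "a = 1" "b = 1" by (auto simp: D_mem)
    then show ?thesis
    proof cases
      case 1 then show ?thesis using rowmono[of 0 b] c by (cases b) auto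
    next
      case 2 then show ?thesis using colmono[of 0 a] c by (cases a) auto
    next
      case 3 then show ?thesis using colmono[of 0 1] h10 c by auto
    qed
  qed
  obtain c where "c \<in> young_diagram (theta n)" "T c = 1" using surjT[of 1] by auto
  then have "T(0,0) \<le> 1" using le by fastforce
  moreover have "T(0,0) \<ge> 1" using rangeT[of "(0,0)"] by (auto simp: D_mem)
  ultimately show ?thesis by simp
qed

lemma mem_arm: "k \<in> arm n T \<longleftrightarrow> (\<exists>j<n+2. T(0,j) = k)"
  by (auto simp: arm_def)

lemma mem_leg: "k \<in> leg n T \<longleftrightarrow> (\<exists>i<n+2. T(i,0) = k)"
  by (auto simp: leg_def)

lemma armleg: "k \<in> arm n T \<Longrightarrow> k \<in> leg n T \<Longrightarrow> k = 1"
proof -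
  assume "k \<in> arm n T" "k \<in> leg n T"
  then obtain i j where ij: "j < n+2" "T(0,j) = k" "i < n+2" "T(i,0) = k"
    unfolding mem_arm mem_leg by auto
  have "(0,j) \<in> young_diagram (theta n)" "(i,0) \<in> young_diagram (theta n)" using ij by (simp_all add: D_mem)
  then have "(0,j) = (i,0)" using injT ij inj_onD by metis
  then show ?thesis using ij T00 by auto
qed

lemma h_arm: "T(1,1) \<notin> arm n T"
proof
  assume "T(1,1) \<in> arm n T"
  then obtain j where j: "j < n+2" "T(0,j) = T(1,1)" unfolding mem_arm by auto
  have "(0,j) \<in> young_diagram (theta n)" "(1,1) \<in> young_diagram (theta n)" using j by (simp_all add: D_mem)
  then have "(0::nat,j) = (1,1)" using injT j inj_onD by metis
  then show False by simp
qed

lemma h_leg: "T(1,1) \<notin> leg n T"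
proof
  assume "T(1,1) \<in> leg n T"
  then obtain j where j: "j < n+2" "T(j,0) = T(1,1)" unfolding mem_leg by auto
  have "(j,0) \<in> young_diagram (theta n)" "(1,1) \<in> young_diagram (theta n)" using j by (simp_all add: D_mem)
  then have "(j,0::nat) = (1,1)" using injT j inj_onD by metis
  then show False by simp
qed

lemma cover: "1 \<le> k \<Longrightarrow> k \<le> 2*n+4 \<Longrightarrow> k \<in> arm n T \<or> k \<in> leg n T \<or> k = T(1,1)"
proof -
  assume "1 \<le> k" "k \<le> 2*n+4"
  then have "\<exists>c\<in>young_diagram (theta n). T c = k" using surjT by auto
  then obtain c where c: "c \<in> young_diagram (theta n)" "T c = k" by blast
  obtain a b where "c = (a,b)" by force
  then show ?thesis using c unfolding mem_arm mem_leg by (auto simp: D_mem)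
qed

lemma arm_range: "k \<in> arm n T \<Longrightarrow> 1 \<le> k \<and> k \<le> 2*n+4"
  unfolding mem_arm using rangeT by (fastforce simp: D_mem)

lemma leg_range: "k \<in> leg n T \<Longrightarrow> 1 \<le> k \<and> k \<le> 2*n+4"
  unfolding mem_leg using rangeT by (fastforce simp: D_mem)

lemma h_range: "T(1,1) \<le> 2*n+4"
  using rangeT[of "(1,1)"] by (simp add: D_mem)

lemma h3: "3 \<le> T(1,1)"
  using T00 colmono[of 0 1] h10 by simp

lemma card_arm: "card (arm n T) = n+2"
proof -
  have "arm n T = T ` ((\<lambda>j. (0,j)) ` {..<n+2})" by (auto simp: arm_def)
  moreover have "inj_on T ((\<lambda>j. (0::nat,j)) ` {..<n+2})"
    by (rule inj_on_subset[OF injT]) (auto simp: D_mem)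
  ultimately show ?thesis by (simp add: card_image inj_on_def)
qed

lemma card_leg: "card (leg n T) = n+2"
proof -
  have "leg n T = T ` ((\<lambda>i. (i,0)) ` {..<n+2})" by (auto simp: leg_def)
  moreover have "inj_on T ((\<lambda>i. (i,0::nat)) ` {..<n+2})"
    by (rule inj_on_subset[OF injT]) (auto simp: D_mem)
  ultimately show ?thesis by (simp add: card_image inj_on_def)
qed

lemma two: "2 \<in> arm n T \<or> 2 \<in> leg n T"
  using cover[of 2] h3 by auto

lemma two_not: "2 \<in> arm n T \<Longrightarrow> 2 \<notin> leg n T"
  using armleg by fastforce

lemma len_psi: "length (psi n T) = 2*n+2"
  by (simp add: psi_def)

definition gT :: "nat \<Rightarrow> step" where
  "gT k = (if k \<in> arm n T then E
                      else if k \<in> leg n T then N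
                      else if k \<in> heart T \<and> 2 \<in> arm n T then S
                      else W)"

lemma psi_nth': "i < 2*n+2 \<Longrightarrow> psi n T ! i = gT (i+3)"
proof -
  assume i: "i < 2*n+2"
  have "psi n T = map (\<lambda>i. gT (i+2)) [1..<2*n+3]" by (simp add: psi_def gT_def)
  then have "psi n T ! i = gT ([1..<2*n+3] ! i + 2)" using i by simp
  also have "[1..<2*n+3] ! i + 2 = i + 3" using i by simp
  finally show ?thesis .
qed

lemma psi_nth: "i < 2*n+2 \<Longrightarrow> psi n T ! i = (if i+3 \<in> arm n T then E
                      else if i+3 \<in> leg n T then N
                      else if i+3 \<in> heart T \<and> 2 \<in> arm n T then S
                      else W)"
  using psi_nth'[of i] unfolding gT_def by simp

lemma psiE: "i < 2*n+2 \<Longrightarrow> psi n T ! i = E \<longleftrightarrow> i+3 \<in> arm n T"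
  by (simp add: psi_nth)

lemma psiN: "i < 2*n+2 \<Longrightarrow> psi n T ! i = N \<longleftrightarrow> i+3 \<in> leg n T"
  using armleg[of "i+3"] by (auto simp: psi_nth)

lemma psiSW: "i < 2*n+2 \<Longrightarrow> (psi n T ! i = S \<or> psi n T ! i = W) \<longleftrightarrow> i+3 = T(1,1)"
  using cover[of "i+3"] h_arm h_leg by (auto simp: psi_nth)

lemma psiS: "i < 2*n+2 \<Longrightarrow> psi n T ! i = S \<longleftrightarrow> i+3 = T(1,1) \<and> 2 \<in> arm n T"
  using cover[of "i+3"] h_arm h_leg by (auto simp: psi_nth heart_def)

lemma psiW: "i < 2*n+2 \<Longrightarrow> psi n T ! i = W \<longleftrightarrow> i+3 = T(1,1) \<and> 2 \<notin> arm n T"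
  using cover[of "i+3"] h_arm h_leg by (auto simp: psi_nth heart_def)

lemma S_in: "S \<in> set (psi n T) \<longleftrightarrow> 2 \<in> arm n T"
proof
  assume "S \<in> set (psi n T)"
  then obtain i where "i < 2*n+2" "psi n T ! i = S" by (auto simp: in_set_conv_nth len_psi)
  then show "2 \<in> arm n T" using psiS by auto
next
  assume a: "2 \<in> arm n T"
  have "T(1,1) - 3 < 2*n+2" using h_range h3 by linarith
  moreover have "psi n T ! (T(1,1) - 3) = S" using psiS[of "T(1,1) - 3"] a h3 h_range by simp
  ultimately show "S \<in> set (psi n T)" by (metis in_set_conv_nth len_psi)
qed

lemma W_in: "W \<in> set (psi n T) \<longleftrightarrow> 2 \<notin> arm n T"
proof
  assume "W \<in> set (psi n T)"
  then obtain i where "i < 2*n+2" "psi n T ! i = W" by (auto simp: in_set_conv_nth len_psi)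
  then show "2 \<notin> arm n T" using psiW by auto
next
  assume a: "2 \<notin> arm n T"
  have "T(1,1) - 3 < 2*n+2" using h_range h3 by linarith
  moreover have "psi n T ! (T(1,1) - 3) = W" using psiW[of "T(1,1) - 3"] a h3 h_range by simp
  ultimately show "W \<in> set (psi n T)" by (metis in_set_conv_nth len_psi)
qed

lemma Aw_psi: "Aw (psi n T) = arm n T"
proof (rule set_eqI)
  fix k
  show "k \<in> Aw (psi n T) \<longleftrightarrow> k \<in> arm n T"
  proof (cases "k < 3")
    case True
    then consider "k = 0" | "k = 1" | "k = 2" by linarith
    then show ?thesis
    proof cases
      case 1 then show ?thesis using arm_range[of 0] by (auto simp: Aw_def img3)
    next
      case 2 then show ?thesis using T00 by (auto simp: Aw_def img3 mem_arm)
    next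
      case 3 then show ?thesis using S_in by (auto simp: Aw_def img3)
    qed
  next
    case False
    then have "k \<in> Aw (psi n T) \<longleftrightarrow> k - 3 < 2*n+2 \<and> psi n T ! (k-3) = E"
      by (auto simp: Aw_def img3 len_psi)
    also have "\<dots> \<longleftrightarrow> k \<in> arm n T"
      using psiE[of "k-3"] False arm_range[of k] by auto
    finally show ?thesis .
  qed
qed

lemma Lw_psi: "Lw (psi n T) = leg n T"
proof (rule set_eqI)
  fix k
  show "k \<in> Lw (psi n T) \<longleftrightarrow> k \<in> leg n T"
  proof (cases "k < 3")
    case True
    then consider "k = 0" | "k = 1" | "k = 2" by linarith
    then show ?thesis
    proof cases
      case 1 then show ?thesis using leg_range[of 0] by (auto simp: Lw_def img3)
    next
      case 2 then show ?thesis using T00 by (auto simp: Lw_def img3 mem_leg)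
    next
      case 3 then show ?thesis using W_in two two_not by (auto simp: Lw_def img3)
    qed
  next
    case False
    then have "k \<in> Lw (psi n T) \<longleftrightarrow> k - 3 < 2*n+2 \<and> psi n T ! (k-3) = N"
      by (auto simp: Lw_def img3 len_psi)
    also have "\<dots> \<longleftrightarrow> k \<in> leg n T"
      using psiN[of "k-3"] False leg_range[of k] by auto
    finally show ?thesis .
  qed
qed

lemma hw_psi: "hw (psi n T) = T(1,1)"
proof -
  have "(LEAST i. i < length (psi n T) \<and> (psi n T ! i = S \<or> psi n T ! i = W)) = T(1,1) - 3"
  proof (rule Least_equality)
    show "T (1, 1) - 3 < length (psi n T) \<and> (psi n T ! (T (1, 1) - 3) = S \<or> psi n T ! (T (1, 1) - 3) = W)"
      using psiSW[of "T(1,1) - 3"] h3 h_range len_psi by auto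
  next
    fix y assume "y < length (psi n T) \<and> (psi n T ! y = S \<or> psi n T ! y = W)"
    then show "T (1, 1) - 3 \<le> y" using psiSW[of y] len_psi by auto
  qed
  then show ?thesis using h3 by (simp add: hw_def)
qed

lemma sl_arm: "sorted_list_of_set (arm n T) = map (\<lambda>j. T(0,j)) [0..<n+2]"
proof -
  have "sorted_wrt (<) (map (\<lambda>j. T(0,j)) [0..<n+2])"
    unfolding sorted_wrt_iff_nth_less using rowmono by (simp del: upt_Suc)
  moreover have "set (map (\<lambda>j. T(0,j)) [0..<n+2]) = arm n T"
  proof -
    have "set (map (\<lambda>j. T(0,j)) [0..<n+2]) = (\<lambda>j. T(0,j)) ` {..<n+2}" by (simp only: set_map set_upt atLeast0LessThan)
    also have "\<dots> = arm n T" by (auto simp: arm_def)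
    finally show ?thesis .
  qed
  moreover have "length (map (\<lambda>j. T(0,j)) [0..<n+2]) = card (arm n T)" by (simp add: card_arm)
  moreover have "finite (arm n T)" by (rule card_ge_0_finite) (simp add: card_arm)
  ultimately show ?thesis using sorted_list_of_set_unique[of "arm n T"] by blast
qed

lemma sl_leg: "sorted_list_of_set (leg n T) = map (\<lambda>i. T(i,0)) [0..<n+2]"
proof -
  have "sorted_wrt (<) (map (\<lambda>i. T(i,0)) [0..<n+2])"
    unfolding sorted_wrt_iff_nth_less using colmono by (simp del: upt_Suc)
  moreover have "set (map (\<lambda>i. T(i,0)) [0..<n+2]) = leg n T"
  proof -
    have "set (map (\<lambda>i. T(i,0)) [0..<n+2]) = (\<lambda>i. T(i,0)) ` {..<n+2}" by (simp only: set_map set_upt atLeast0LessThan)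
    also have "\<dots> = leg n T" by (auto simp: leg_def)
    finally show ?thesis .
  qed
  moreover have "length (map (\<lambda>i. T(i,0)) [0..<n+2]) = card (leg n T)" by (simp add: card_leg)
  moreover have "finite (leg n T)" by (rule card_ge_0_finite) (simp add: card_leg)
  ultimately show ?thesis using sorted_list_of_set_unique[of "leg n T"] by blast
qed

lemma phi_psi: "phi n (psi n T) = T"
proof (rule ext)
  fix c :: "nat \<times> nat"
  obtain a b where c: "c = (a,b)" by force
  show "phi n (psi n T) c = T c"
  proof (cases "(a,b) \<in> young_diagram (theta n)")
    case True
    then consider "a = 1" "b = 1" | "a = 0" "b < n+2" | "b = 0" "0 < a" "a < n+2" by (auto simp: D_mem)
    then show ?thesis
    proof cases
      case 1 then show ?thesis using c hw_psi by (simp add: phi_def)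
    next
      case 2 then show ?thesis using c by (auto simp: phi_def Aw_psi sl_arm simp del: upt_Suc)
    next
      case 3 then show ?thesis using c by (auto simp: phi_def Lw_psi sl_leg simp del: upt_Suc)
    qed
  next
    case False
    then show ?thesis using c outT by (auto simp: phi_def D_mem)
  qed
qed

lemma psi_paths: "psi n T \<in> paths n"
proof -
  let ?w = "psi n T"
  have cA: "1 + (if S \<in> set ?w then 1 else 0) + count_list ?w E = n+2"
    using card_Aw[of ?w] card_arm Aw_psi by simp
  have cL: "1 + (if W \<in> set ?w then 1 else 0) + count_list ?w N = n+2"
    using card_Lw[of ?w] card_leg Lw_psi by simp
  have hidx: "T(1,1) - 3 < length ?w" using h3 h_range len_psi by simp
  have iS: "idx ?w S = (if 2 \<in> arm n T then {T(1,1) - 3} else {})"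
    using psiS h3 hidx by (auto simp: idx_def len_psi)
  have iW: "idx ?w W = (if 2 \<in> arm n T then {} else {T(1,1) - 3})"
    using psiW h3 hidx by (auto simp: idx_def len_psi)
  have ep: "endpoint ?w = (int n, int n)"
  proof (cases "2 \<in> arm n T")
    case True
    then show ?thesis using cA cL iS iW S_in W_in
      by (simp add: endpoint_cnt count_idx)
  next
    case False
    then show ?thesis using cA cL iS iW S_in W_in
      by (simp add: endpoint_cnt count_idx)
  qed
  have bS: "\<forall>j<length ?w. ?w!j = S \<longrightarrow> (\<exists>i<j. ?w!i = N)"
  proof (intro allI impI)
    fix j assume j: "j < length ?w" "?w!j = S"
    then have jh: "j + 3 = T(1,1)" and a2: "2 \<in> arm n T" using psiS len_psi by auto
    have "T(1,0) \<in> leg n T" using mem_leg by fastforce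
    moreover have "T(1,0) \<noteq> 1"
    proof
      assume "T(1,0) = 1"
      then have e: "T(1,0) = T(0,0)" using T00 by simp
      have m: "(1,0) \<in> young_diagram (theta n)" "(0,0) \<in> young_diagram (theta n)" by (simp_all add: D_mem)
      show False using inj_onD[OF injT e m] by simp
    qed
    moreover have "T(1,0) \<noteq> 2" using a2 two_not calculation(1) by auto
    ultimately have g3: "3 \<le> T(1,0)" using leg_range[of "T(1,0)"] by linarith
    have "T(1,0) - 3 < j" using h10 jh g3 by linarith
    moreover have "T(1,0) - 3 < 2*n+2" using h10 h_range g3 by linarith
    then have "?w ! (T(1,0) - 3) = N" using psiN[of "T(1,0) - 3"] g3 \<open>T(1,0) \<in> leg n T\<close> j jh len_psi by simp
    ultimately show "\<exists>i<j. ?w!i = N" by blast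
  qed
  have bW: "\<forall>j<length ?w. ?w!j = W \<longrightarrow> (\<exists>i<j. ?w!i = E)"
  proof (intro allI impI)
    fix j assume j: "j < length ?w" "?w!j = W"
    then have jh: "j + 3 = T(1,1)" and a2: "2 \<notin> arm n T" using psiW len_psi by auto
    have "T(0,1) \<in> arm n T" using mem_arm by fastforce
    moreover have "T(0,1) \<noteq> 1"
    proof
      assume "T(0,1) = 1"
      then have e: "T(0,1) = T(0,0)" using T00 by simp
      have m: "(0,1) \<in> young_diagram (theta n)" "(0,0) \<in> young_diagram (theta n)" by (simp_all add: D_mem)
      show False using inj_onD[OF injT e m] by simp
    qed
    moreover have "T(0,1) \<noteq> 2" using a2 calculation(1) by auto
    ultimately have g3: "3 \<le> T(0,1)" using arm_range[of "T(0,1)"] by linarith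
    have "T(0,1) - 3 < j" using h01 jh g3 by linarith
    moreover have "T(0,1) - 3 < 2*n+2" using h01 h_range g3 by linarith
    then have "?w ! (T(0,1) - 3) = E" using psiE[of "T(0,1) - 3"] g3 \<open>T(0,1) \<in> arm n T\<close> j jh len_psi by simp
    ultimately show "\<exists>i<j. ?w!i = E" by blast
  qed
  have uS: "\<forall>i<length ?w. \<forall>j<length ?w. ?w!i = S \<longrightarrow> ?w!j = S \<longrightarrow> i = j"
    using psiS len_psi by fastforce
  have uW: "\<forall>i<length ?w. \<forall>j<length ?w. ?w!i = W \<longrightarrow> ?w!j = W \<longrightarrow> i = j"
    using psiW len_psi by fastforce
  have pre: "fst (endpoint (take k ?w)) \<ge> 0 \<and> snd (endpoint (take k ?w)) \<ge> 0" for k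
    using prefix_ok[OF bS uS, of k] prefix_ok[OF bW uW, of k] by (simp add: endpoint_cnt)
  show ?thesis using ep pre len_psi by (simp add: paths_def)
qed

end

context
  fixes n :: nat and w :: "step list"
  assumes w: "w \<in> paths n"
begin

lemma lenw: "length w = 2*n+2"
  using w by (simp add: paths_def)

lemma cnts: "int (count_list w E) - int (count_list w W) = int n"
  "int (count_list w N) - int (count_list w S) = int n"
  using w by (simp_all add: paths_def endpoint_cnt)

lemma cases_SW: "(count_list w S = 1 \<and> count_list w W = 0 \<and> count_list w E = n \<and> count_list w N = n+1)
  \<or> (count_list w S = 0 \<and> count_list w W = 1 \<and> count_list w E = n+1 \<and> count_list w N = n)"
  using cnts count_len[of w] lenw by linarith

lemma ex_k0_aux:
  assumes c1: "count_list w a = 1" and c0: "count_list w b = 0"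
  shows "\<exists>k0. k0 < length w \<and> (w!k0 = a \<or> w!k0 = b) \<and> (\<forall>i<length w. w!i = a \<or> w!i = b \<longrightarrow> i = k0)"
proof -
  have "card (idx w a) = 1" using c1 by (simp add: count_idx)
  then obtain k where k: "idx w a = {k}" by (rule card_1_singletonE)
  have e: "idx w b = {}" using c0 by (simp add: count_idx)
  have "k \<in> idx w a" using k by simp
  then have m: "k < length w" "w!k = a" by (simp_all add: idx_def)
  have u: "\<forall>i<length w. w!i = a \<or> w!i = b \<longrightarrow> i = k"
  proof (intro allI impI)
    fix i assume i: "i < length w" "w!i = a \<or> w!i = b"
    show "i = k"
    proof (cases "w!i = a")
      case True then have "i \<in> idx w a" using i by (simp add: idx_def)
      then show ?thesis using k by simp
    next
      case False then have "i \<in> idx w b" using i by (simp add: idx_def)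
      then show ?thesis using e by simp
    qed
  qed
  show ?thesis using m u by blast
qed

lemma ex_k0: "\<exists>k0. k0 < length w \<and> (w!k0 = S \<or> w!k0 = W) \<and> (\<forall>i<length w. w!i = S \<or> w!i = W \<longrightarrow> i = k0)"
  using cases_SW
proof
  assume c: "count_list w S = 1 \<and> count_list w W = 0 \<and> count_list w E = n \<and> count_list w N = n+1"
  then show ?thesis using ex_k0_aux[of S W] by simp
next
  assume c: "count_list w S = 0 \<and> count_list w W = 1 \<and> count_list w E = n+1 \<and> count_list w N = n"
  then show ?thesis using ex_k0_aux[of W S] by (simp add: disj_commute)
qed

definition k0 where "k0 = hw w - 3"

lemma k0_props: "k0 < length w" "w!k0 = S \<or> w!k0 = W" "\<And>i. i < length w \<Longrightarrow> w!i = S \<or> w!i = W \<Longrightarrow> i = k0"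
  and hw_k0: "hw w = k0 + 3"
proof -
  obtain k where k: "k < length w" "w!k = S \<or> w!k = W" "\<forall>i<length w. w!i = S \<or> w!i = W \<longrightarrow> i = k"
    using ex_k0 by blast
  have "(LEAST i. i < length w \<and> (w!i = S \<or> w!i = W)) = k"
  proof (rule Least_equality)
    show "k < length w \<and> (w!k = S \<or> w!k = W)" using k(1,2) by blast
  next
    fix y assume "y < length w \<and> (w!y = S \<or> w!y = W)"
    then have "y = k" using k(3) by blast
    then show "k \<le> y" by simp
  qed
  then have h: "hw w = k + 3" unfolding hw_def by (rule arg_cong)
  then have kk: "k0 = k" unfolding k0_def by simp
  show "k0 < length w" using k(1) kk by simp
  show "w!k0 = S \<or> w!k0 = W" using k(2) kk by simp
  show "\<And>i. i < length w \<Longrightarrow> w!i = S \<or> w!i = W \<Longrightarrow> i = k0" using k(3) kk by blast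
  show "hw w = k0 + 3" using h kk by simp
qed

lemma S_iff: "S \<in> set w \<longleftrightarrow> w!k0 = S"
proof
  assume "S \<in> set w"
  then obtain i where i: "i < length w" "w!i = S" by (auto simp: in_set_conv_nth)
  then have "i = k0" using k0_props(3) by blast
  then show "w!k0 = S" using i by simp
next
  assume "w!k0 = S" then show "S \<in> set w" using k0_props(1) by (metis nth_mem)
qed

lemma W_iff: "W \<in> set w \<longleftrightarrow> w!k0 = W"
proof
  assume "W \<in> set w"
  then obtain i where i: "i < length w" "w!i = W" by (auto simp: in_set_conv_nth)
  then have "i = k0" using k0_props(3) by blast
  then show "w!k0 = W" using i by simp
next
  assume "w!k0 = W" then show "W \<in> set w" using k0_props(1) by (metis nth_mem)
qed

lemma card_Aw_w: "card (Aw w) = n+2"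
  using cases_SW
proof
  assume c: "count_list w S = 1 \<and> count_list w W = 0 \<and> count_list w E = n \<and> count_list w N = n+1"
  then show ?thesis using card_Aw[of w] count_list_0_iff[of w S] by simp
next
  assume c: "count_list w S = 0 \<and> count_list w W = 1 \<and> count_list w E = n+1 \<and> count_list w N = n"
  then show ?thesis using card_Aw[of w] count_list_0_iff[of w S] by simp
qed

lemma card_Lw_w: "card (Lw w) = n+2"
  using cases_SW
proof
  assume c: "count_list w S = 1 \<and> count_list w W = 0 \<and> count_list w E = n \<and> count_list w N = n+1"
  then show ?thesis using card_Lw[of w] count_list_0_iff[of w W] by simp
next
  assume c: "count_list w S = 0 \<and> count_list w W = 1 \<and> count_list w E = n+1 \<and> count_list w N = n"
  then show ?thesis using card_Lw[of w] count_list_0_iff[of w W] by simp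
qed

lemma Aw_range: "x \<in> Aw w \<Longrightarrow> 1 \<le> x \<and> x \<le> 2*n+4"
  using lenw by (auto simp: Aw_def idx_def split: if_splits)

lemma Lw_range: "x \<in> Lw w \<Longrightarrow> 1 \<le> x \<and> x \<le> 2*n+4"
  using lenw by (auto simp: Lw_def idx_def split: if_splits)

lemma sA0: "sorted_list_of_set (Aw w) ! 0 = 1"
  using sl0[of "Aw w"] Aw_range by (auto simp: Aw_def)

lemma sL0: "sorted_list_of_set (Lw w) ! 0 = 1"
  using sl0[of "Lw w"] Lw_range by (auto simp: Lw_def)

lemma before: "w!k0 = S \<Longrightarrow> \<exists>i<k0. w!i = N" "w!k0 = W \<Longrightarrow> \<exists>i<k0. w!i = E"
proof -
  have tk: "take (k0+1) w ! k0 = w ! k0" "length (take (k0+1) w) = k0 + 1" using k0_props(1) by auto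
  have pre: "0 \<le> fst (endpoint (take (k0+1) w))" "0 \<le> snd (endpoint (take (k0+1) w))"
    using w k0_props(1) by (auto simp: paths_def)
  {
    assume a: "w!k0 = S"
    then have "S \<in> set (take (k0+1) w)" unfolding in_set_conv_nth using tk by (intro exI[of _ k0]) simp
    then have "count_list (take (k0+1) w) S \<noteq> 0" by (simp add: count_list_0_iff)
    then have "count_list (take (k0+1) w) N \<noteq> 0" using pre by (simp add: endpoint_cnt)
    then have "N \<in> set (take (k0+1) w)" by (simp add: count_list_0_iff)
    then obtain i where i: "i < k0 + 1" "take (k0+1) w ! i = N" using tk by (auto simp: in_set_conv_nth)
    then have "w!i = N" by simp
    moreover have "i \<noteq> k0" using a \<open>w!i = N\<close> by auto
    ultimately have "i < k0" "w!i = N" using i by auto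
    then show "\<exists>i<k0. w!i = N" by blast
  }
  {
    assume a: "w!k0 = W"
    then have "W \<in> set (take (k0+1) w)" unfolding in_set_conv_nth using tk by (intro exI[of _ k0]) simp
    then have "count_list (take (k0+1) w) W \<noteq> 0" by (simp add: count_list_0_iff)
    then have "count_list (take (k0+1) w) E \<noteq> 0" using pre by (simp add: endpoint_cnt)
    then have "E \<in> set (take (k0+1) w)" by (simp add: count_list_0_iff)
    then obtain i where i: "i < k0 + 1" "take (k0+1) w ! i = E" using tk by (auto simp: in_set_conv_nth)
    then have "w!i = E" by simp
    moreover have "i \<noteq> k0" using a \<open>w!i = E\<close> by auto
    ultimately have "i < k0" "w!i = E" using i by auto
    then show "\<exists>i<k0. w!i = E" by blast
  }
qed

lemma P11: "phi n w (1,1) = hw w"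
  by (simp add: phi_def)

lemma P0j: "j < n+2 \<Longrightarrow> phi n w (0,j) = sorted_list_of_set (Aw w) ! j"
  by (simp add: phi_def)

lemma Pi0: "0 < i \<Longrightarrow> i < n+2 \<Longrightarrow> phi n w (i,0) = sorted_list_of_set (Lw w) ! i"
  by (simp add: phi_def)

lemma Pout: "(a,b) \<notin> young_diagram (theta n) \<Longrightarrow> phi n w (a,b) = 0"
  by (auto simp: phi_def D_mem)

lemma hw_range: "3 \<le> hw w" "hw w \<le> 2*n+4"
  using hw_k0 k0_props(1) lenw by auto

lemma sL1_lt: "sorted_list_of_set (Lw w) ! 1 < hw w"
proof (cases "w!k0 = S")
  case True
  then obtain i where i: "i < k0" "w!i = N" using before(1) by blast
  have "i + 3 \<in> Lw w" unfolding Lw_def using img3[of "i+3" w N] i k0_props(1) by simp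
  then have "sorted_list_of_set (Lw w) ! 1 \<le> i + 3" using sl1[OF finite_Lw[of w] sL0] by simp
  then show ?thesis using i hw_k0 by simp
next
  case False
  then have "W \<in> set w" using k0_props(2) W_iff by simp
  then have "2 \<in> Lw w" by (simp add: Lw_def)
  then have "sorted_list_of_set (Lw w) ! 1 \<le> 2" using sl1[OF finite_Lw[of w] sL0] by simp
  then show ?thesis using hw_range by simp
qed

lemma sA1_lt: "sorted_list_of_set (Aw w) ! 1 < hw w"
proof (cases "w!k0 = W")
  case True
  then obtain i where i: "i < k0" "w!i = E" using before(2) by blast
  have "i + 3 \<in> Aw w" unfolding Aw_def using img3[of "i+3" w E] i k0_props(1) by simp
  then have "sorted_list_of_set (Aw w) ! 1 \<le> i + 3" using sl1[OF finite_Aw[of w] sA0] by simp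
  then show ?thesis using i hw_k0 by simp
next
  case False
  then have "S \<in> set w" using k0_props(2) S_iff by simp
  then have "2 \<in> Aw w" by (simp add: Aw_def)
  then have "sorted_list_of_set (Aw w) ! 1 \<le> 2" using sl1[OF finite_Aw[of w] sA0] by simp
  then show ?thesis using hw_range by simp
qed

lemma inAw: "i < 2*n+2 \<Longrightarrow> i + 3 \<in> Aw w \<longleftrightarrow> w!i = E"
  using lenw img3[of "i+3" w E] by (simp add: Aw_def)

lemma inLw: "i < 2*n+2 \<Longrightarrow> i + 3 \<in> Lw w \<longleftrightarrow> w!i = N"
  using lenw img3[of "i+3" w N] by (simp add: Lw_def)

lemma two_in: "2 \<in> Aw w \<longleftrightarrow> S \<in> set w" "2 \<in> Lw w \<longleftrightarrow> W \<in> set w"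
  by (auto simp: Aw_def Lw_def img3)

lemma img_phi: "phi n w ` young_diagram (theta n) = {1..2*n+4}"
proof
  show "phi n w ` young_diagram (theta n) \<subseteq> {1..2*n+4}"
  proof
    fix x assume "x \<in> phi n w ` young_diagram (theta n)"
    then obtain c where c: "c \<in> young_diagram (theta n)" "x = phi n w c" by blast
    obtain a b where ab: "c = (a,b)" by force
    have "(a,b) \<in> young_diagram (theta n)" using c ab by simp
    then consider "a = 1" "b = 1" | "a = 0" "b < n+2" | "b = 0" "0 < a" "a < n+2" by (auto simp: D_mem)
    then show "x \<in> {1..2*n+4}"
    proof cases
      case 1 then show ?thesis using c ab P11 hw_range by simp
    next
      case 2 then show ?thesis using c ab P0j[of b] slmem[OF finite_Aw[of w], of b] card_Aw_w Aw_range by simp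
    next
      case 3 then show ?thesis using c ab Pi0[of a] slmem[OF finite_Lw[of w], of a] card_Lw_w Lw_range by simp
    qed
  qed
next
  show "{1..2*n+4} \<subseteq> phi n w ` young_diagram (theta n)"
  proof
    fix k assume k: "k \<in> {1..2*n+4}"
    show "k \<in> phi n w ` young_diagram (theta n)"
    proof (cases "k \<in> Aw w")
      case True
      then obtain j where j: "j < n+2" "sorted_list_of_set (Aw w) ! j = k" using slall[OF finite_Aw[of w]] card_Aw_w by metis
      then have "phi n w (0,j) = k" using P0j by simp
      moreover have "(0,j) \<in> young_diagram (theta n)" using j by (simp add: D_mem)
      ultimately show ?thesis by (metis image_eqI)
    next
      case nA: False
      show ?thesis
      proof (cases "k \<in> Lw w")
        case True
        then obtain j where j: "j < n+2" "sorted_list_of_set (Lw w) ! j = k" using slall[OF finite_Lw[of w]] card_Lw_w by metis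
        show ?thesis
        proof (cases "j = 0")
          case True
          then have "phi n w (0,0) = k" using P0j[of 0] j sA0 sL0 by simp
          moreover have "(0,0) \<in> young_diagram (theta n)" by (simp add: D_mem)
          ultimately show ?thesis by (metis image_eqI)
        next
          case False
          then have "phi n w (j,0) = k" using Pi0[of j] j by simp
          moreover have "(j,0) \<in> young_diagram (theta n)" using j by (simp add: D_mem)
          ultimately show ?thesis by (metis image_eqI)
        qed
      next
        case nL: False
        have "1 \<in> Aw w" by (simp add: Aw_def)
        moreover have "2 \<in> Aw w \<or> 2 \<in> Lw w" using two_in S_iff W_iff k0_props(2) by blast
        ultimately have k3: "3 \<le> k" using k nA nL by (cases "k = 1 \<or> k = 2") auto
        define i where "i = k - 3"
        have i: "i < 2*n+2" "k = i + 3" using k k3 by (auto simp: i_def)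
        have "w!i \<noteq> E" "w!i \<noteq> N" using inAw[OF i(1)] inLw[OF i(1)] nA nL i(2) by auto
        then have "w!i = S \<or> w!i = W" by (cases "w!i") auto
        then have "i = k0" using k0_props(3) i(1) lenw by simp
        then have "phi n w (1,1) = k" using P11 hw_k0 i by simp
        moreover have "(1,1) \<in> young_diagram (theta n)" by (simp add: D_mem)
        ultimately show ?thesis by (metis image_eqI)
      qed
    qed
  qed
qed

lemma phi_SYT: "phi n w \<in> SYT (theta n)"
proof -
  let ?P = "phi n w"
  let ?D = "young_diagram (theta n)"
  have bij: "bij_betw ?P ?D {1..2*n+4}"
    unfolding bij_betw_def using img_phi inj_on_iff_eq_card[OF finite_D, of ?P] card_D by simp
  have row: "\<forall>i j. (i, j) \<in> ?D \<and> (i, Suc j) \<in> ?D \<longrightarrow> ?P (i, j) < ?P (i, Suc j)"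
  proof (intro allI impI)
    fix i j assume a: "(i, j) \<in> ?D \<and> (i, Suc j) \<in> ?D"
    then consider "i = 0" "Suc j < n+2" | "i = 1" "j = 0" by (auto simp: D_mem)
    then show "?P (i, j) < ?P (i, Suc j)"
    proof cases
      case 1 then show ?thesis using P0j slmono[OF finite_Aw[of w], of j "Suc j"] card_Aw_w by simp
    next
      case 2 then show ?thesis using Pi0[of 1] P11 sL1_lt by simp
    qed
  qed
  have col: "\<forall>i j. (i, j) \<in> ?D \<and> (Suc i, j) \<in> ?D \<longrightarrow> ?P (i, j) < ?P (Suc i, j)"
  proof (intro allI impI)
    fix i j assume a: "(i, j) \<in> ?D \<and> (Suc i, j) \<in> ?D"
    then consider "j = 0" "i = 0" | "j = 0" "0 < i" "Suc i < n+2" | "i = 0" "j = 1" by (auto simp: D_mem)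
    then show "?P (i, j) < ?P (Suc i, j)"
    proof cases
      case 1 then show ?thesis using P0j[of 0] Pi0[of 1] sA0 sL0 slmono[OF finite_Lw[of w], of 0 1] card_Lw_w by simp
    next
      case 2 then show ?thesis using Pi0[of i] Pi0[of "Suc i"] slmono[OF finite_Lw[of w], of i "Suc i"] card_Lw_w by simp
    next
      case 3 then show ?thesis using P0j[of 1] P11 sA1_lt by simp
    qed
  qed
  have out: "\<forall>c. c \<notin> ?D \<longrightarrow> ?P c = 0"
    using Pout by auto
  show ?thesis unfolding SYT_def mem_Collect_eq sum_theta using bij row col out by blast
qed

lemma psi_phi: "psi n (phi n w) = w"
proof -
  let ?P = "phi n w"
  have arm: "arm n ?P = Aw w"
  proof (rule set_eqI)
    fix x
    have "x \<in> arm n ?P \<longleftrightarrow> (\<exists>j<n+2. ?P (0,j) = x)"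
      by (auto simp: arm_def)
    also have "\<dots> \<longleftrightarrow> (\<exists>j<n+2. sorted_list_of_set (Aw w) ! j = x)"
      using P0j by auto
    also have "\<dots> \<longleftrightarrow> x \<in> Aw w"
      using slall[OF finite_Aw[of w], of x] slmem[OF finite_Aw[of w]] card_Aw_w by auto
    finally show "x \<in> arm n ?P \<longleftrightarrow> x \<in> Aw w" .
  qed
  have legeq: "\<And>i. i < n+2 \<Longrightarrow> ?P (i,0) = sorted_list_of_set (Lw w) ! i"
    using P0j[of 0] sA0 sL0 Pi0 by (case_tac "i = 0") auto
  have leg: "leg n ?P = Lw w"
  proof (rule set_eqI)
    fix x
    have "x \<in> leg n ?P \<longleftrightarrow> (\<exists>i<n+2. ?P (i,0) = x)"
      by (auto simp: leg_def)
    also have "\<dots> \<longleftrightarrow> (\<exists>i<n+2. sorted_list_of_set (Lw w) ! i = x)"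
      using legeq by auto
    also have "\<dots> \<longleftrightarrow> x \<in> Lw w"
      using slall[OF finite_Lw[of w], of x] slmem[OF finite_Lw[of w]] card_Lw_w by auto
    finally show "x \<in> leg n ?P \<longleftrightarrow> x \<in> Lw w" .
  qed
  have heart: "heart ?P = {hw w}" unfolding heart_def using P11 by (simp only:)
  show ?thesis
  proof (rule nth_equalityI)
    show "length (psi n ?P) = length w" using lenw len_psi_gen by simp
  next
    fix i assume "i < length (psi n ?P)"
    then have i: "i < 2*n+2" using len_psi_gen by simp
    have p: "psi n ?P ! i = (if w!i = E then E else if w!i = N then N
              else if i + 3 = hw w \<and> S \<in> set w then S else W)"
      using psi_nth_gen[OF i, of ?P] unfolding arm leg heart inAw[OF i] inLw[OF i] two_in by simp
    show "psi n ?P ! i = w ! i"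
    proof (cases "w!i")
      case N then show ?thesis using p by simp
    next
      case E then show ?thesis using p by simp
    next
      case S
      then have "i = k0" using k0_props(3) i lenw by simp
      then show ?thesis using p S hw_k0 S_iff by simp
    next
      case W
      then have "i = k0" using k0_props(3) i lenw by simp
      then show ?thesis using p W hw_k0 S_iff by simp
    qed
  qed
qed

end

theorem theorem3p1:
  fixes n :: nat
  shows "(\<forall>T \<in> SYT (theta n). psi n T \<in> paths n)
       \<and> bij_betw (psi n) (SYT (theta n)) (paths n)
       \<and> card (paths n) = card (SYT (theta n))"
proof -
  have b: "bij_betw (psi n) (SYT (theta n)) (paths n)"
    by (rule bij_betw_byWitness[where f'="phi n"]) (auto simp: phi_psi psi_phi psi_paths phi_SYT)
  then show ?thesis using psi_paths bij_betw_same_card[OF b] by auto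
qed

end
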